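(* Let $F_1,\dots,F_l\in\mathfrak{M}_n^{+}$ satisfy $\sum_{j=1}^l F_j=I_n$, let $R\in\mathfrak{M}_n^{+}$ and $N\in\mathbb{N}$. Then \[ \sum_{k_1,\dots,k_N}\big\|F_{k_1}e^{R/N}F_{k_2}e^{R/N}\cdots F_{k_N}e^{R/N}\big\|\le n\,\|e^{R}\|, \] where the sum is over all $(k_1,\dots,k_N)\in\{1,\dots,l\}^N$.
   Context: $\mathfrak{M}_n^{+}$ is the set of $n\times n$ matrices all of whose entries are non-negative real numbers; $I_n$ is the identity matrix; $\|\cdot\|$ is the operator norm. *)

theory Defs
  imports "HOL-Analysis.Analysis"
begin

text \<open>n x n real matrices are rendered as real^'n^'n (n = CARD('n)).\<close>

definition nonneg_mat :: "real^'n^'n \<Rightarrow> bool" where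
  "nonneg_mat A \<longleftrightarrow> (\<forall>i j. A $ i $ j \<ge> 0)"

definition mat_pow :: "real^'n^'n \<Rightarrow> nat \<Rightarrow> real^'n^'n" where
  "mat_pow A k = (((**) A) ^^ k) (mat 1)"

definition mat_exp :: "real^'n^'n \<Rightarrow> real^'n^'n" where
  "mat_exp A = (\<Sum>k. (1 / fact k) *\<^sub>R mat_pow A k)"

definition op_norm :: "real^'n^'n \<Rightarrow> real" where
  "op_norm A = onorm (\<lambda>x. A *v x)"

definition mat_prod_list :: "(real^'n^'n) list \<Rightarrow> real^'n^'n" where
  "mat_prod_list As = foldr (**) As (mat 1)"

end

theory Submission
  imports Defs
begin

lemma matrix_add_rdistrib_local: "((B + C) ** A) = (B ** A) + (C ** A)"
  for A B C :: "real^'n^'n"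
  by (vector matrix_matrix_mult_def sum.distrib[symmetric] field_simps)

lemma mv_add: "(*v) (A + B) = (\<lambda>x. (*v) A x + (*v) B x)" for A B :: "real^'n^'n"
  by (rule ext) (simp add: matrix_vector_mult_add_rdistrib)
lemma mv_scale: "(*v) (a *\<^sub>R A) = (\<lambda>x. a *\<^sub>R (*v) A x)" for A :: "real^'n^'n"
  by (rule ext) (simp add: vec_eq_iff matrix_vector_mult_def sum_distrib_left mult.assoc)
lemma mv_mult: "(*v) (A ** B) = (\<lambda>x. (*v) A ((*v) B x))" for A B :: "real^'n^'n"
  by (rule ext) (simp add: matrix_vector_mul_assoc)
lemma onorm_mat_add: "onorm ((*v) (A + B)) \<le> onorm ((*v) A) + onorm ((*v) B)" for A B :: "real^'n^'n"
  unfolding mv_add by (rule onorm_triangle) auto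
lemma onorm_mat_scale: "onorm ((*v) (a *\<^sub>R A)) = \<bar>a\<bar> * onorm ((*v) A)" for A :: "real^'n^'n"
  unfolding mv_scale by (rule onorm_scaleR) auto
lemma onorm_mat_mult: "onorm ((*v) (A ** B)) \<le> onorm ((*v) A) * onorm ((*v) B)" for A B :: "real^'n^'n"
  unfolding mv_mult using onorm_compose[of "(*v) A" "(*v) B"] by (simp add: o_def)
lemma onorm_mat_1: "onorm ((*v) (mat 1 :: real^'n^'n)) = 1"
proof -
  have "(*v) (mat 1::real^'n^'n) = (\<lambda>x. x)" by (rule ext) simp
  then show ?thesis using onorm_id[where 'a="real^'n"] by simp
qed
lemma mat1_nz: "(mat 1 :: real^'n^'n) \<noteq> 0"
proof
  assume "mat 1 = (0::real^'n^'n)"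
  then have "(mat 1::real^'n^'n) $ undefined $ undefined = 0" by simp
  then show False by (simp add: mat_def)
qed
lemma mv_zero_iff: "(\<forall>x. (A::real^'n^'n) *v x = 0) \<longleftrightarrow> A = 0"
  using matrix_eq[of A 0] by simp

lemma mscal_l: "(a *\<^sub>R A) ** B = a *\<^sub>R (A ** B)" for A B :: "real^'n^'n"
  by (simp add: scalar_matrix_assoc)
lemma mscal_r: "A ** (a *\<^sub>R B) = a *\<^sub>R (A ** B)" for A B :: "real^'n^'n"
  by (simp add: matrix_matrix_mult_def vec_eq_iff sum_distrib_left mult_ac)

typedef ('n::finite) sqm = "UNIV :: (real^'n^'n) set" by simp

instantiation sqm :: (finite) real_normed_algebra_1
begin
definition "0 = Abs_sqm 0"
definition "1 = Abs_sqm (mat 1)"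
definition "a + b = Abs_sqm (Rep_sqm a + Rep_sqm b)"
definition "a - b = Abs_sqm (Rep_sqm a - Rep_sqm b)"
definition "- a = Abs_sqm (- Rep_sqm a)"
definition "a * b = Abs_sqm (Rep_sqm a ** Rep_sqm b)"
definition "scaleR r a = Abs_sqm (r *\<^sub>R Rep_sqm a)"
definition norm_sqm :: "'a sqm \<Rightarrow> real" where "norm_sqm a = onorm ((*v) (Rep_sqm a))"
definition sgn_sqm :: "'a sqm \<Rightarrow> 'a sqm" where "sgn_sqm x = scaleR (inverse (norm x)) x"
definition dist_sqm :: "'a sqm \<Rightarrow> 'a sqm \<Rightarrow> real" where "dist_sqm a b = norm (a - b)"
definition uniformity_sqm :: "('a sqm \<times> 'a sqm) filter" where
  "uniformity_sqm = (INF e\<in>{0 <..}. principal {(x, y). dist x y < e})"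
definition open_sqm :: "'a sqm set \<Rightarrow> bool"
  where "open_sqm S = (\<forall>x\<in>S. \<forall>\<^sub>F (x', y) in uniformity. x' = x \<longrightarrow> y \<in> S)"

lemmas sqm_defs = zero_sqm_def one_sqm_def plus_sqm_def minus_sqm_def uminus_sqm_def
  times_sqm_def scaleR_sqm_def norm_sqm_def

instance
proof
  show "dist x y = norm (x - y)" for x y :: "'a sqm" by (fact dist_sqm_def)
  show "sgn x = inverse (norm x) *\<^sub>R x" for x :: "'a sqm" by (fact sgn_sqm_def)
  show "uniformity = (INF e\<in>{0 <..}. principal {(x, y). dist x y < (e::real)} :: ('a sqm \<times> 'a sqm) filter)" by (fact uniformity_sqm_def)
  show "norm x = 0 \<longleftrightarrow> x = 0" for x :: "'a sqm"
    unfolding sqm_defs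
    by (metis Rep_sqm_inverse Abs_sqm_inverse UNIV_I onorm_eq_0 matrix_vector_mul_bounded_linear mv_zero_iff)
  show "norm (x + y) \<le> norm x + norm y" for x y :: "'a sqm"
    unfolding sqm_defs by (simp add: Abs_sqm_inverse onorm_mat_add)
  show "norm (a *\<^sub>R x) = \<bar>a\<bar> * norm x" for a and x :: "'a sqm"
    unfolding sqm_defs by (simp add: Abs_sqm_inverse onorm_mat_scale)
  show "norm (x * y) \<le> norm x * norm y" for x y :: "'a sqm"
    unfolding sqm_defs by (simp add: Abs_sqm_inverse onorm_mat_mult)
  show "norm (1::'a sqm) = 1"
    unfolding sqm_defs by (simp add: Abs_sqm_inverse onorm_mat_1)
  show "(0::'a sqm) \<noteq> 1"
    unfolding sqm_defs by (simp add: Abs_sqm_inject mat1_nz[symmetric])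
  show "open U = (\<forall>x\<in>U. \<forall>\<^sub>F (x', y) in uniformity. x' = x \<longrightarrow> y \<in> U)" for U :: "'a sqm set" by (fact open_sqm_def)
  show "a + b + c = a + (b + c)" for a b c :: "'a sqm"
    unfolding sqm_defs by (simp add: Abs_sqm_inverse add.assoc)
  show "a + b = b + a" for a b :: "'a sqm"
    unfolding sqm_defs by (simp add: add.commute)
  show "- a + a = 0" for a :: "'a sqm"
    unfolding sqm_defs by (simp add: Abs_sqm_inverse)
  show "a *\<^sub>R (x + y) = a *\<^sub>R x + a *\<^sub>R y" for a and x y :: "'a sqm"
    unfolding sqm_defs by (simp add: Abs_sqm_inverse scaleR_add_right)
  show "(a + b) *\<^sub>R x = a *\<^sub>R x + b *\<^sub>R x" for a b and x :: "'a sqm"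
    unfolding sqm_defs by (simp add: Abs_sqm_inverse scaleR_add_left)
  show "a * b * c = a * (b * c)" for a b c :: "'a sqm"
    unfolding sqm_defs by (simp add: Abs_sqm_inverse matrix_mul_assoc)
  show "(a + b) * c = a * c + b * c" for a b c :: "'a sqm"
    unfolding sqm_defs by (simp add: Abs_sqm_inverse matrix_add_rdistrib_local)
  show "a * (b + c) = a * b + a * c" for a b c :: "'a sqm"
    unfolding sqm_defs by (simp add: Abs_sqm_inverse matrix_add_ldistrib)
  show "a *\<^sub>R x * y = a *\<^sub>R (x * y)" for a and x y :: "'a sqm"
    unfolding sqm_defs by (simp add: Abs_sqm_inverse mscal_l)
  show "x * a *\<^sub>R y = a *\<^sub>R (x * y)" for a and x y :: "'a sqm"
    unfolding sqm_defs by (simp add: Abs_sqm_inverse mscal_r)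
  show "a - b = a + - b" for a b :: "'a sqm"
    unfolding sqm_defs by (simp add: Abs_sqm_inverse)
  show "0 + a = a" for a :: "'a sqm"
    unfolding sqm_defs by (simp add: Abs_sqm_inverse Rep_sqm_inverse)
  show "a *\<^sub>R b *\<^sub>R x = (a * b) *\<^sub>R x" for a b and x :: "'a sqm"
    unfolding sqm_defs by (simp add: Abs_sqm_inverse)
  show "1 *\<^sub>R x = x" for x :: "'a sqm"
    unfolding sqm_defs by (simp add: Rep_sqm_inverse)
  show "1 * a = a" for a :: "'a sqm"
    unfolding sqm_defs by (simp add: Abs_sqm_inverse Rep_sqm_inverse)
  show "a * 1 = a" for a :: "'a sqm"
    unfolding sqm_defs by (simp add: Abs_sqm_inverse Rep_sqm_inverse)
qed
end

lemma Rep_add: "Rep_sqm (a + b) = Rep_sqm a + Rep_sqm b"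
  by (simp add: plus_sqm_def Abs_sqm_inverse)
lemma Rep_scale: "Rep_sqm (r *\<^sub>R a) = r *\<^sub>R Rep_sqm a"
  by (simp add: scaleR_sqm_def Abs_sqm_inverse)
lemma Abs_add: "Abs_sqm (A + B) = Abs_sqm A + Abs_sqm B"
  by (simp add: plus_sqm_def Abs_sqm_inverse)
lemma Abs_scale: "Abs_sqm (r *\<^sub>R A) = r *\<^sub>R Abs_sqm A"
  by (simp add: scaleR_sqm_def Abs_sqm_inverse)
lemma Abs_mult: "Abs_sqm (A ** B) = Abs_sqm A * Abs_sqm B"
  by (simp add: times_sqm_def Abs_sqm_inverse)
lemma norm_Abs: "norm (Abs_sqm A) = onorm ((*v) A)"
  by (simp add: norm_sqm_def Abs_sqm_inverse)

lemma frob_le_onorm: "norm (A::real^'n^'n) \<le> real CARD('n) * real CARD('n) * onorm ((*v) A)"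
proof -
  have "norm A \<le> (\<Sum>i\<in>UNIV. norm (A $ i))"
    by (simp add: norm_vec_def L2_set_le_sum)
  also have "\<dots> \<le> (\<Sum>i\<in>(UNIV::'n set). \<Sum>j\<in>(UNIV::'n set). onorm ((*v) A))"
  proof (rule sum_mono)
    fix i
    have "norm (A $ i) \<le> (\<Sum>j\<in>UNIV. \<bar>A $ i $ j\<bar>)" by (rule norm_le_l1_cart)
    also have "\<dots> \<le> (\<Sum>j\<in>(UNIV::'n set). onorm ((*v) A))"
      by (rule sum_mono) (rule matrix_component_le_onorm)
    finally show "norm (A $ i) \<le> (\<Sum>j\<in>(UNIV::'n set). onorm ((*v) A))" .
  qed
  also have "\<dots> = real CARD('n) * real CARD('n) * onorm ((*v) A)" by simp
  finally show ?thesis .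
qed

lemma onorm_le_frob: "onorm ((*v) (A::real^'n^'n)) \<le> real CARD('n) * real CARD('n) * norm A"
proof -
  have "onorm ((*v) A) \<le> (\<Sum>i\<in>UNIV. \<Sum>j\<in>UNIV. \<bar>A $ i $ j\<bar>)"
    by (rule onorm_le_matrix_component_sum)
  also have "\<dots> \<le> (\<Sum>i\<in>(UNIV::'n set). \<Sum>j\<in>(UNIV::'n set). norm A)"
  proof (intro sum_mono)
    fix i j
    show "\<bar>A $ i $ j\<bar> \<le> norm A"
      by (meson component_le_norm_cart Finite_Cartesian_Product.norm_nth_le order_trans)
  qed
  also have "\<dots> = real CARD('n) * real CARD('n) * norm A" by simp
  finally show ?thesis .
qed

lemma bl_Rep: "bounded_linear (Rep_sqm :: 'n::finite sqm \<Rightarrow> real^'n^'n)"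
proof
  show "Rep_sqm (a + b) = Rep_sqm a + Rep_sqm b" for a b :: "'n sqm" by (rule Rep_add)
  show "Rep_sqm (r *\<^sub>R a) = r *\<^sub>R Rep_sqm a" for r and a :: "'n sqm" by (rule Rep_scale)
  show "\<exists>K. \<forall>x::'n sqm. norm (Rep_sqm x) \<le> norm x * K"
    using frob_le_onorm by (auto simp: norm_sqm_def mult.commute intro!: exI[of _ "real CARD('n) * real CARD('n)"])
qed

lemma bl_Abs: "bounded_linear (Abs_sqm :: real^'n^'n \<Rightarrow> 'n::finite sqm)"
proof
  show "Abs_sqm (a + b) = Abs_sqm a + Abs_sqm b" for a b :: "real^'n^'n" by (rule Abs_add)
  show "Abs_sqm (r *\<^sub>R a) = r *\<^sub>R Abs_sqm a" for r and a :: "real^'n^'n" by (rule Abs_scale)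
  show "\<exists>K. \<forall>x::real^'n^'n. norm (Abs_sqm x) \<le> norm x * K"
    using onorm_le_frob by (auto simp: norm_Abs mult.commute intro!: exI[of _ "real CARD('n) * real CARD('n)"])
qed

instance sqm :: (finite) banach
proof
  fix X :: "nat \<Rightarrow> 'a sqm"
  assume "Cauchy X"
  then have "Cauchy (\<lambda>n. Rep_sqm (X n))" by (rule bounded_linear.Cauchy[OF bl_Rep])
  then obtain L where "(\<lambda>n. Rep_sqm (X n)) \<longlonglongrightarrow> L" using Cauchy_convergent_iff convergent_def by blast
  then have "(\<lambda>n. Abs_sqm (Rep_sqm (X n))) \<longlonglongrightarrow> Abs_sqm L" by (rule bounded_linear.tendsto[OF bl_Abs])
  then show "convergent X" by (auto simp: Rep_sqm_inverse convergent_def)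
qed

lemma Abs_mat_pow: "Abs_sqm (mat_pow A k) = Abs_sqm A ^ k"
  by (induction k) (simp_all add: mat_pow_def one_sqm_def Abs_mult)

lemma mat_exp_sums: "(\<lambda>k. (1 / fact k) *\<^sub>R mat_pow A k) sums Rep_sqm (exp (Abs_sqm A))"
proof -
  have "(\<lambda>k. Rep_sqm ((Abs_sqm A)^k /\<^sub>R fact k)) sums Rep_sqm (exp (Abs_sqm A))"
    by (rule bounded_linear.sums[OF bl_Rep exp_converges])
  moreover have "Rep_sqm ((Abs_sqm A)^k /\<^sub>R fact k) = (1 / fact k) *\<^sub>R mat_pow A k" for k
    by (simp add: Rep_scale Abs_mat_pow[symmetric] Abs_sqm_inverse divide_inverse)
  ultimately show ?thesis by simp
qed

lemma mat_exp_Rep: "mat_exp A = Rep_sqm (exp (Abs_sqm A))"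
  unfolding mat_exp_def using mat_exp_sums sums_unique by metis

lemma exp_nat_mult_gen: "exp (of_nat n * x) = exp x ^ n" for x :: "'a::{real_normed_algebra_1,banach}"
proof (induction n)
  case 0 then show ?case by simp
next
  case (Suc n)
  have c: "x * (of_nat n * x) = (of_nat n * x) * x"
    by (metis mult.assoc mult_of_nat_commute)
  have "exp (of_nat (Suc n) * x) = exp (x + of_nat n * x)" by (simp add: distrib_right)
  also have "\<dots> = exp x * exp (of_nat n * x)" by (rule exp_add_commuting[OF c])
  finally show ?case using Suc by simp
qed

lemma mat_pow_exp: "mat_pow (mat_exp A) N = mat_exp (real N *\<^sub>R A)"
proof -
  have "Abs_sqm (mat_pow (mat_exp A) N) = exp (Abs_sqm A) ^ N"
    by (simp add: Abs_mat_pow mat_exp_Rep Rep_sqm_inverse)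
  also have "\<dots> = exp (of_nat N * Abs_sqm A)" by (rule exp_nat_mult_gen[symmetric])
  also have "of_nat N * Abs_sqm A = Abs_sqm (real N *\<^sub>R A)"
    unfolding Abs_scale by (metis of_real_of_nat_eq scaleR_conv_of_real)
  finally show ?thesis
    by (metis Abs_sqm_inverse UNIV_I mat_exp_Rep)
qed


lemma nonneg_mult: "nonneg_mat A \<Longrightarrow> nonneg_mat B \<Longrightarrow> nonneg_mat (A ** B)"
  by (simp add: nonneg_mat_def matrix_matrix_mult_def sum_nonneg)

lemma nonneg_mat_1: "nonneg_mat (mat 1)"
  by (simp add: nonneg_mat_def mat_def)

lemma nonneg_scale: "nonneg_mat A \<Longrightarrow> 0 \<le> c \<Longrightarrow> nonneg_mat (c *\<^sub>R A)"
  by (simp add: nonneg_mat_def)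

lemma nonneg_pow: "nonneg_mat A \<Longrightarrow> nonneg_mat (mat_pow A k)"
  by (induction k) (simp_all add: mat_pow_def nonneg_mat_1 nonneg_mult)

lemma nonneg_exp: assumes "nonneg_mat A" shows "nonneg_mat (mat_exp A)"
  unfolding nonneg_mat_def
proof (intro allI)
  fix i j
  have s: "(\<lambda>k. (1 / fact k) *\<^sub>R mat_pow A k) sums mat_exp A"
    using mat_exp_sums mat_exp_Rep by metis
  have "(\<lambda>k. ((1 / fact k) *\<^sub>R mat_pow A k) $ i) sums (mat_exp A $ i)"
    by (rule bounded_linear.sums[OF bounded_linear_vec_nth s])
  then have s2: "(\<lambda>k. ((1 / fact k) *\<^sub>R mat_pow A k) $ i $ j) sums (mat_exp A $ i $ j)"
    by (rule bounded_linear.sums[OF bounded_linear_vec_nth])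
  have "\<And>k. 0 \<le> ((1 / fact k) *\<^sub>R mat_pow A k) $ i $ j"
    using nonneg_pow[OF assms] by (simp add: nonneg_mat_def)
  then show "0 \<le> mat_exp A $ i $ j"
    using sums_le[OF _ sums_zero s2] by blast
qed

lemma nonneg_prod_list: "(\<forall>A\<in>set As. nonneg_mat A) \<Longrightarrow> nonneg_mat (mat_prod_list As)"
  by (induction As) (simp_all add: mat_prod_list_def nonneg_mat_1 nonneg_mult)

lemma foldr_mult: "foldr (**) xs B = foldr (**) xs (mat 1) ** (B::real^'n^'n)"
  by (induction xs) (simp_all add: matrix_mul_assoc)

lemma prod_list_append1: "mat_prod_list (xs @ [x]) = mat_prod_list xs ** (x::real^'n^'n)"
  unfolding mat_prod_list_def by (simp add: foldr_mult[of xs x])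

lemma mat_pow_Suc2: "mat_pow (A::real^'n^'n) (Suc m) = mat_pow A m ** A"
proof -
  have "Abs_sqm (mat_pow A (Suc m)) = Abs_sqm (mat_pow A m ** A)"
    by (simp only: Abs_mat_pow Abs_mult power_Suc2)
  then show ?thesis by (simp add: Abs_sqm_inject)
qed

lemma mult_sum_right: "(A::real^'n^'n) ** sum f S = (\<Sum>x\<in>S. A ** f x)"
  by (induction S rule: infinite_finite_induct) (simp_all add: matrix_add_ldistrib)

lemma mult_sum_left: "sum f S ** (A::real^'n^'n) = (\<Sum>x\<in>S. f x ** A)"
  for f :: "'b \<Rightarrow> real^'n^'n"
  by (induction S rule: infinite_finite_induct) (simp_all add: matrix_add_rdistrib_local)

lemma sum_PiE_prod:
  fixes G :: "nat \<Rightarrow> real^'n^'n"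
  assumes "finite S"
  shows "(\<Sum>k\<in>{0..<m} \<rightarrow>\<^sub>E S. mat_prod_list (map (\<lambda>i. G (k i)) [0..<m])) = mat_pow (\<Sum>j\<in>S. G j) m"
proof (induction m)
  case 0
  then show ?case by (simp add: mat_prod_list_def mat_pow_def)
next
  case (Suc m)
  let ?P = "{0..<m} \<rightarrow>\<^sub>E S"
  let ?f = "\<lambda>k. mat_prod_list (map (\<lambda>i. G (k i)) [0..<Suc m])"
  have eq: "{0..<Suc m} \<rightarrow>\<^sub>E S = (\<lambda>(y, g). g(m := y)) ` (S \<times> ?P)"
    using PiE_insert_eq[of m "{0..<m}" "\<lambda>_. S"] by (simp add: atLeast0_lessThan_Suc)
  have inj: "inj_on (\<lambda>(y, g). g(m := y)) (S \<times> ?P)"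
    using inj_combinator[of m "{0..<m}" "\<lambda>_. S"] by simp
  have fe: "?f (g(m := y)) = mat_prod_list (map (\<lambda>i. G (g i)) [0..<m]) ** G y" for g y
  proof -
    have "map (\<lambda>i. G ((g(m := y)) i)) [0..<Suc m] = map (\<lambda>i. G (g i)) [0..<m] @ [G y]"
      by (simp; rule map_cong; auto)
    then show ?thesis by (simp only: prod_list_append1)
  qed
  have "sum ?f ({0..<Suc m} \<rightarrow>\<^sub>E S) = (\<Sum>(y, g)\<in>S \<times> ?P. ?f (g(m := y)))"
    unfolding eq by (subst sum.reindex[OF inj]) (simp add: case_prod_unfold)
  also have "\<dots> = (\<Sum>(y, g)\<in>S \<times> ?P. mat_prod_list (map (\<lambda>i. G (g i)) [0..<m]) ** G y)"
  proof (rule sum.cong[OF refl])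
    fix x assume "x \<in> S \<times> ?P"
    then obtain y g where x: "x = (y, g)" by auto
    show "(case x of (y, g) \<Rightarrow> ?f (g(m := y))) =
      (case x of (y, g) \<Rightarrow> mat_prod_list (map (\<lambda>i. G (g i)) [0..<m]) ** G y)"
      unfolding x by (simp only: fe case_prod_conv)
  qed
  also have "\<dots> = (\<Sum>y\<in>S. \<Sum>g\<in>?P. mat_prod_list (map (\<lambda>i. G (g i)) [0..<m]) ** G y)"
    by (rule sum.cartesian_product[symmetric])
  also have "\<dots> = (\<Sum>y\<in>S. mat_pow (\<Sum>j\<in>S. G j) m ** G y)"
    by (simp add: mult_sum_left[symmetric] Suc)
  also have "\<dots> = mat_pow (\<Sum>j\<in>S. G j) (Suc m)"
    by (simp add: mult_sum_right[symmetric] mat_pow_Suc2)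
  finally show ?case .
qed

lemma onorm_le_entry_sum:
  assumes "nonneg_mat A"
  shows "op_norm A \<le> (\<Sum>i\<in>UNIV. \<Sum>j\<in>UNIV. A $ i $ j)"
  using onorm_le_matrix_component_sum[of A] assms by (simp add: op_norm_def nonneg_mat_def)

lemma entry_sum_le:
  fixes A :: "real^'n^'n"
  shows "(\<Sum>i\<in>UNIV. \<Sum>j\<in>UNIV. A $ i $ j) \<le> real CARD('n) * op_norm A"
proof -
  define u :: "real^'n" where "u = (\<chi> i. 1)"
  have "(\<Sum>i\<in>UNIV. \<Sum>j\<in>UNIV. A $ i $ j) = u \<bullet> (A *v u)"
    by (simp add: u_def inner_vec_def matrix_vector_mult_def)
  also have "\<dots> \<le> norm u * norm (A *v u)" by (rule norm_cauchy_schwarz)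
  also have "\<dots> \<le> norm u * (op_norm A * norm u)"
    unfolding op_norm_def
    by (rule mult_left_mono[OF onorm[OF matrix_vector_mul_bounded_linear]]) simp
  also have "\<dots> = op_norm A * (norm u)\<^sup>2" by (simp add: power2_eq_square)
  also have "(norm u)\<^sup>2 = real CARD('n)"
    by (simp add: power2_norm_eq_inner u_def inner_vec_def)
  finally show ?thesis by (simp add: mult.commute)
qed


theorem lemma3p4:
  fixes F :: "nat \<Rightarrow> real^'n^'n" and R :: "real^'n^'n" and l N :: nat
  assumes "\<forall>j\<in>{1..l}. nonneg_mat (F j)"
    and "(\<Sum>j=1..l. F j) = mat 1"
    and "nonneg_mat R"
    and "N \<ge> 1"
  shows "(\<Sum>k\<in>{0..<N} \<rightarrow>\<^sub>E {1..l}.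
            op_norm (mat_prod_list
              (map (\<lambda>i. F (k i) ** mat_exp ((1 / real N) *\<^sub>R R)) [0..<N])))
         \<le> real CARD('n) * op_norm (mat_exp R)"
proof -
  define E where "E = mat_exp ((1 / real N) *\<^sub>R R)"
  define P where "P = (\<lambda>k. mat_prod_list (map (\<lambda>i. F (k i) ** E) [0..<N]))"
  have Enn: "nonneg_mat E"
    unfolding E_def by (rule nonneg_exp[OF nonneg_scale[OF assms(3)]]) simp
  have Pnn: "nonneg_mat (P k)" if "k \<in> {0..<N} \<rightarrow>\<^sub>E {1..l}" for k
    unfolding P_def
  proof (rule nonneg_prod_list, safe)
    fix A assume "A \<in> set (map (\<lambda>i. F (k i) ** E) [0..<N])"
    then obtain i where "i < N" and A: "A = F (k i) ** E" by auto
    then have "k i \<in> {1..l}" using that by auto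
    then show "nonneg_mat A" unfolding A using assms(1) Enn nonneg_mult by blast
  qed
  have sumP: "(\<Sum>k\<in>{0..<N} \<rightarrow>\<^sub>E {1..l}. P k) = mat_exp R"
  proof -
    have "(\<Sum>k\<in>{0..<N} \<rightarrow>\<^sub>E {1..l}. P k) = mat_pow (\<Sum>j\<in>{1..l}. F j ** E) N"
      unfolding P_def by (rule sum_PiE_prod) simp
    also have "(\<Sum>j\<in>{1..l}. F j ** E) = E"
      using mult_sum_left[of F "{1..l}" E, symmetric] assms(2) by simp
    also have "mat_pow E N = mat_exp (real N *\<^sub>R ((1 / real N) *\<^sub>R R))"
      unfolding E_def by (rule mat_pow_exp)
    also have "real N *\<^sub>R ((1 / real N) *\<^sub>R R) = R"
      using assms(4) by simp
    finally show ?thesis .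
  qed
  have "(\<Sum>k\<in>{0..<N} \<rightarrow>\<^sub>E {1..l}. op_norm (P k))
      \<le> (\<Sum>k\<in>{0..<N} \<rightarrow>\<^sub>E {1..l}. \<Sum>i\<in>UNIV. \<Sum>j\<in>UNIV. P k $ i $ j)"
    by (rule sum_mono) (rule onorm_le_entry_sum[OF Pnn])
  also have "\<dots> = (\<Sum>i\<in>UNIV. \<Sum>j\<in>UNIV. (\<Sum>k\<in>{0..<N} \<rightarrow>\<^sub>E {1..l}. P k) $ i $ j)"
    unfolding sum_component by (subst sum.swap, rule sum.cong[OF refl], rule sum.swap)
  also have "\<dots> \<le> real CARD('n) * op_norm (mat_exp R)"
    unfolding sumP by (rule entry_sum_le)
  finally show ?thesis unfolding P_def E_def .
qed

end
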